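(* Let $A$ and $B$ be differential rings and $\nu\colon A\to B$ a differential homomorphism. Suppose $B$ is differentially generated over $\nu(A)$ by a single element $\eta\in B$, and that there exist $b_1,\ldots,b_n\in A$ such that $\nu(b_k)\eta\in\nu(A)$ for all $k$ and $\{b_1,\ldots,b_n\}=A$. Then the contraction map $\nu^*\colon \operatorname{Spec}^\Delta B\to V(\ker\nu)$, $\mathfrak q\mapsto\nu^{-1}(\mathfrak q)$, is a homeomorphism, where $V(\ker\nu)\subseteq\operatorname{Spec}^\Delta A$ carries the subspace topology.
   Context: All rings are commutative with unit; homomorphisms preserve the unit. A differential ring is a ring equipped with finitely many pairwise commuting derivations; a differential homomorphism is a ring homomorphism commuting with the derivations. $B$ is differentially generated over $\nu(A)$ by $\eta$ if $B$ is the smallest differential subring of $B$ containing $\nu(A)$ and $\eta$ (i.e. $B$ is generated as a ring over $\nu(A)$ by all derivatives of $\eta$ of all orders). For a differential ring $A$, $\operatorname{Spec}^\Delta A$ is the set of prime ideals of $A$ closed under all the derivations (prime differential ideals); for $E\subseteq A$, $V(E)$ is the set of prime differential ideals containing $E$, and the sets $V(E)$ are the closed sets of the Kolchin topology on $\operatorname{Spec}^\Delta A$. For $E\subseteq A$, $\{E\}$ denotes the smallest radical differential ideal of $A$ containing $E$. *)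

theory Defs
  imports "HOL-Analysis.Analysis"
begin

definition is_derivation :: "('a::comm_ring_1 \<Rightarrow> 'a) \<Rightarrow> bool" where
  "is_derivation D \<longleftrightarrow> (\<forall>x y. D (x + y) = D x + D y) \<and> (\<forall>x y. D (x * y) = x * D y + y * D x)"

definition diff_ring :: "nat \<Rightarrow> (nat \<Rightarrow> 'a::comm_ring_1 \<Rightarrow> 'a) \<Rightarrow> bool" where
  "diff_ring m d \<longleftrightarrow> (\<forall>i<m. is_derivation (d i)) \<and>
     (\<forall>i<m. \<forall>j<m. \<forall>x. d i (d j x) = d j (d i x))"

definition diff_hom :: "nat \<Rightarrow> (nat \<Rightarrow> 'a::comm_ring_1 \<Rightarrow> 'a) \<Rightarrow> (nat \<Rightarrow> 'b::comm_ring_1 \<Rightarrow> 'b)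
    \<Rightarrow> ('a \<Rightarrow> 'b) \<Rightarrow> bool" where
  "diff_hom m dA dB \<nu> \<longleftrightarrow> (\<forall>x y. \<nu> (x + y) = \<nu> x + \<nu> y) \<and> (\<forall>x y. \<nu> (x * y) = \<nu> x * \<nu> y)
     \<and> \<nu> 1 = 1 \<and> (\<forall>i<m. \<forall>x. \<nu> (dA i x) = dB i (\<nu> x))"

definition diff_subring :: "nat \<Rightarrow> (nat \<Rightarrow> 'a::comm_ring_1 \<Rightarrow> 'a) \<Rightarrow> 'a set \<Rightarrow> bool" where
  "diff_subring m d S \<longleftrightarrow> 1 \<in> S \<and> (\<forall>x\<in>S. \<forall>y\<in>S. x + y \<in> S \<and> x * y \<in> S \<and> - x \<in> S)
     \<and> (\<forall>i<m. \<forall>x\<in>S. d i x \<in> S)"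

definition diff_generated :: "nat \<Rightarrow> (nat \<Rightarrow> 'b::comm_ring_1 \<Rightarrow> 'b) \<Rightarrow> ('a \<Rightarrow> 'b) \<Rightarrow> 'b \<Rightarrow> bool" where
  "diff_generated m dB \<nu> \<eta> \<longleftrightarrow>
     \<Inter>{S. diff_subring m dB S \<and> range \<nu> \<subseteq> S \<and> \<eta> \<in> S} = UNIV"

definition is_ideal :: "'a::comm_ring_1 set \<Rightarrow> bool" where
  "is_ideal I \<longleftrightarrow> 0 \<in> I \<and> (\<forall>x\<in>I. \<forall>y\<in>I. x + y \<in> I) \<and> (\<forall>x\<in>I. \<forall>r. r * x \<in> I)"

definition diff_ideal :: "nat \<Rightarrow> (nat \<Rightarrow> 'a::comm_ring_1 \<Rightarrow> 'a) \<Rightarrow> 'a set \<Rightarrow> bool" where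
  "diff_ideal m d I \<longleftrightarrow> is_ideal I \<and> (\<forall>i<m. \<forall>x\<in>I. d i x \<in> I)"

definition is_prime_ideal :: "'a::comm_ring_1 set \<Rightarrow> bool" where
  "is_prime_ideal P \<longleftrightarrow> is_ideal P \<and> 1 \<notin> P \<and> (\<forall>x y. x * y \<in> P \<longrightarrow> x \<in> P \<or> y \<in> P)"

definition is_radical :: "'a::comm_ring_1 set \<Rightarrow> bool" where
  "is_radical I \<longleftrightarrow> (\<forall>x n. x ^ n \<in> I \<longrightarrow> x \<in> I)"

text \<open>The radical differential ideal generated by E, written {E} in the paper.\<close>
definition rad_diff_ideal_gen :: "nat \<Rightarrow> (nat \<Rightarrow> 'a::comm_ring_1 \<Rightarrow> 'a) \<Rightarrow> 'a set \<Rightarrow> 'a set" where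
  "rad_diff_ideal_gen m d E = \<Inter>{I. diff_ideal m d I \<and> is_radical I \<and> E \<subseteq> I}"

definition diff_spec :: "nat \<Rightarrow> (nat \<Rightarrow> 'a::comm_ring_1 \<Rightarrow> 'a) \<Rightarrow> 'a set set" where
  "diff_spec m d = {P. is_prime_ideal P \<and> diff_ideal m d P}"

definition diff_V :: "nat \<Rightarrow> (nat \<Rightarrow> 'a::comm_ring_1 \<Rightarrow> 'a) \<Rightarrow> 'a set \<Rightarrow> 'a set set" where
  "diff_V m d E = {P \<in> diff_spec m d. E \<subseteq> P}"

definition kolchin_topology :: "nat \<Rightarrow> (nat \<Rightarrow> 'a::comm_ring_1 \<Rightarrow> 'a) \<Rightarrow> 'a set topology" where
  "kolchin_topology m d = topology (\<lambda>U. \<exists>E. U = diff_spec m d - diff_V m d E)"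

end

theory Submission
  imports Defs
begin


lemma kol_istop: "istopology (\<lambda>U. \<exists>E. U = diff_spec m d - diff_V m d E)"
  unfolding istopology_def
proof (intro conjI allI impI)
  fix S T assume "\<exists>E. S = diff_spec m d - diff_V m d E" "\<exists>E. T = diff_spec m d - diff_V m d E"
  then obtain E1 E2 where S: "S = diff_spec m d - diff_V m d E1" and T: "T = diff_spec m d - diff_V m d E2" by blast
  have "S \<inter> T = diff_spec m d - diff_V m d {x * y |x y. x \<in> E1 \<and> y \<in> E2}"
  proof (rule set_eqI)
    fix P
    show "P \<in> S \<inter> T \<longleftrightarrow> P \<in> diff_spec m d - diff_V m d {x * y |x y. x \<in> E1 \<and> y \<in> E2}"
    proof (cases "P \<in> diff_spec m d")
      case True
      then have pr: "is_prime_ideal P" by (simp add: diff_spec_def)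
      then have id: "is_ideal P" by (simp add: is_prime_ideal_def)
      have "{x * y |x y. x \<in> E1 \<and> y \<in> E2} \<subseteq> P \<longleftrightarrow> E1 \<subseteq> P \<or> E2 \<subseteq> P"
      proof
        assume h: "{x * y |x y. x \<in> E1 \<and> y \<in> E2} \<subseteq> P"
        show "E1 \<subseteq> P \<or> E2 \<subseteq> P"
        proof (rule ccontr)
          assume "\<not> (E1 \<subseteq> P \<or> E2 \<subseteq> P)"
          then obtain x y where "x \<in> E1" "x \<notin> P" "y \<in> E2" "y \<notin> P" by blast
          moreover have "x * y \<in> P" using h calculation by blast
          ultimately show False using pr by (auto simp: is_prime_ideal_def)
        qed
      next
        assume "E1 \<subseteq> P \<or> E2 \<subseteq> P"
        then show "{x * y |x y. x \<in> E1 \<and> y \<in> E2} \<subseteq> P"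
          using id unfolding is_ideal_def by (auto, metis mult.commute subsetD)
      qed
      then show ?thesis using True by (auto simp: S T diff_V_def)
    next
      case False then show ?thesis by (auto simp: S T diff_V_def)
    qed
  qed
  then show "\<exists>E. S \<inter> T = diff_spec m d - diff_V m d E" by blast
next
  fix K assume K: "\<forall>S\<in>K. \<exists>E. S = diff_spec m d - diff_V m d E"
  define E where "E = \<Union>{E. diff_spec m d - diff_V m d E \<in> K}"
  have "\<Union>K = diff_spec m d - diff_V m d E"
  proof (rule set_eqI)
    fix P show "P \<in> \<Union>K \<longleftrightarrow> P \<in> diff_spec m d - diff_V m d E"
    proof
      assume "P \<in> \<Union>K"
      then obtain S where "S \<in> K" "P \<in> S" by blast
      with K obtain E0 where "S = diff_spec m d - diff_V m d E0" by blast
      then show "P \<in> diff_spec m d - diff_V m d E"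
        using \<open>S \<in> K\<close> \<open>P \<in> S\<close> by (auto simp: E_def diff_V_def)
    next
      assume "P \<in> diff_spec m d - diff_V m d E"
      then obtain E0 where "diff_spec m d - diff_V m d E0 \<in> K" "\<not> E0 \<subseteq> P" "P \<in> diff_spec m d"
        by (auto simp: E_def diff_V_def)
      then have "P \<in> diff_spec m d - diff_V m d E0" by (auto simp: diff_V_def)
      then show "P \<in> \<Union>K" using \<open>diff_spec m d - diff_V m d E0 \<in> K\<close> by blast
    qed
  qed
  then show "\<exists>E. \<Union>K = diff_spec m d - diff_V m d E" by blast
qed

lemma openin_kol: "openin (kolchin_topology m d) U \<longleftrightarrow> (\<exists>E. U = diff_spec m d - diff_V m d E)"
  unfolding kolchin_topology_def using kol_istop[of m d] by simp

lemma topspace_kol: "topspace (kolchin_topology m d) = diff_spec m d"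
proof -
  have "diff_spec m d - diff_V m d {1} = diff_spec m d"
    by (auto simp: diff_V_def diff_spec_def is_prime_ideal_def)
  then have "openin (kolchin_topology m d) (diff_spec m d)" unfolding openin_kol by metis
  then have "diff_spec m d \<subseteq> topspace (kolchin_topology m d)" by (rule openin_subset)
  moreover have "topspace (kolchin_topology m d) \<subseteq> diff_spec m d"
    unfolding topspace_def openin_kol by auto
  ultimately show ?thesis by blast
qed

lemma closedin_kol: "closedin (kolchin_topology m d) S \<longleftrightarrow> (\<exists>E. S = diff_V m d E)"
proof -
  have V: "diff_V m d E \<subseteq> diff_spec m d" for E by (auto simp: diff_V_def)
  show ?thesis
    unfolding closedin_def topspace_kol openin_kol
  proof safe
    fix E assume "S \<subseteq> diff_spec m d" "diff_spec m d - S = diff_spec m d - diff_V m d E"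
    then have "S = diff_V m d E" using V[of E] by blast
    then show "\<exists>E. S = diff_V m d E" by blast
  next
    fix E x assume "x \<in> diff_V m d E" then show "x \<in> diff_spec m d" using V by blast
  next
    fix E show "\<exists>E'. diff_spec m d - diff_V m d E = diff_spec m d - diff_V m d E'" by blast
  qed
qed



lemma deriv_one: "is_derivation D \<Longrightarrow> D 1 = 0"
proof -
  assume "is_derivation D"
  then have "D (1*1) = 1 * D 1 + 1 * D 1" unfolding is_derivation_def by blast
  then show ?thesis by simp
qed

lemma deriv_pow: "is_derivation D \<Longrightarrow> D (u ^ N) * u = of_nat N * u ^ N * D u"
proof (induction N)
  case 0 then show ?case using deriv_one[OF 0] by simp
next
  case (Suc N)
  have "D (u ^ Suc N) = u * D (u^N) + u^N * D u" using Suc.prems unfolding is_derivation_def by simp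
  then have "D (u ^ Suc N) * u = u * (D (u^N) * u) + u^Suc N * D u" by (simp add: algebra_simps)
  also have "\<dots> = of_nat (Suc N) * u ^ Suc N * D u" using Suc by (simp add: algebra_simps)
  finally show ?case .
qed

lemma ideal_facts:
  assumes "is_ideal P"
  shows "0 \<in> P" "x \<in> P \<Longrightarrow> y \<in> P \<Longrightarrow> x + y \<in> P" "x \<in> P \<Longrightarrow> r * x \<in> P"
    "x \<in> P \<Longrightarrow> x * r \<in> P" "x \<in> P \<Longrightarrow> - x \<in> P" "x \<in> P \<Longrightarrow> y \<in> P \<Longrightarrow> x - y \<in> P"
proof -
  show "0 \<in> P" using assms by (simp add: is_ideal_def)
  show "x \<in> P \<Longrightarrow> y \<in> P \<Longrightarrow> x + y \<in> P" using assms by (simp add: is_ideal_def)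
  have a: "x \<in> P \<Longrightarrow> r * x \<in> P" for r x using assms by (simp add: is_ideal_def)
  show "x \<in> P \<Longrightarrow> r * x \<in> P" by (rule a)
  show "x \<in> P \<Longrightarrow> x * r \<in> P" using a[of x r] by (simp add: mult.commute)
  have b: "x \<in> P \<Longrightarrow> - x \<in> P" for x using a[of x "-1"] by simp
  show "x \<in> P \<Longrightarrow> - x \<in> P" by (rule b)
  show "x \<in> P \<Longrightarrow> y \<in> P \<Longrightarrow> x - y \<in> P" proof -
    assume "x \<in> P" "y \<in> P"
    then have "x + - y \<in> P" using b[of y] assms by (simp only: is_ideal_def)
    then show "x - y \<in> P" by simp
  qed
qed

lemma prime_pow_cancel:
  assumes "is_prime_ideal P" "b \<notin> P" "b ^ N * x \<in> P" shows "x \<in> P"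
  using assms(3)
proof (induction N)
  case 0 then show ?case by simp
next
  case (Suc N)
  then have "b * (b^N * x) \<in> P" by (simp add: mult.assoc)
  then show ?case using assms(1,2) Suc.IH unfolding is_prime_ideal_def by blast
qed

locale dsetup =
  fixes m :: nat and dA :: "nat \<Rightarrow> 'a::comm_ring_1 \<Rightarrow> 'a" and dB :: "nat \<Rightarrow> 'b::comm_ring_1 \<Rightarrow> 'b"
    and \<nu> :: "'a \<Rightarrow> 'b"
  assumes rA: "diff_ring m dA" and rB: "diff_ring m dB" and hom: "diff_hom m dA dB \<nu>"
begin

lemma derA: "i < m \<Longrightarrow> is_derivation (dA i)" using rA by (simp add: diff_ring_def)
lemma derB: "i < m \<Longrightarrow> is_derivation (dB i)" using rB by (simp add: diff_ring_def)

lemma nu_add[simp]: "\<nu> (x + y) = \<nu> x + \<nu> y" using hom by (simp add: diff_hom_def)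
lemma nu_mult[simp]: "\<nu> (x * y) = \<nu> x * \<nu> y" using hom by (simp add: diff_hom_def)
lemma nu_one[simp]: "\<nu> 1 = 1" using hom by (simp add: diff_hom_def)
lemma nu_d: "i < m \<Longrightarrow> \<nu> (dA i x) = dB i (\<nu> x)" using hom by (simp add: diff_hom_def)
lemma nu_zero[simp]: "\<nu> 0 = 0"
proof - have "\<nu> (0 + 0) = \<nu> 0 + \<nu> 0" by (rule nu_add) then show ?thesis by simp qed
lemma nu_neg[simp]: "\<nu> (- x) = - \<nu> x"
proof - have "\<nu> (x + - x) = \<nu> x + \<nu> (-x)" by (rule nu_add) then show ?thesis by (metis nu_add neg_eq_iff_add_eq_0 add.right_inverse nu_zero) qed
lemma nu_diff[simp]: "\<nu> (x - y) = \<nu> x - \<nu> y"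
  using nu_add[of x "-y"] by simp
lemma nu_pow[simp]: "\<nu> (x ^ N) = \<nu> x ^ N" by (induction N) auto
lemma nu_of_nat[simp]: "\<nu> (of_nat N) = of_nat N" by (induction N) auto

lemma key:
  assumes i: "i < m" and e: "\<nu> b ^ N * y = \<nu> a"
  shows "\<nu> b ^ Suc N * dB i y = \<nu> (b * dA i a - of_nat N * dA i b * a)"
proof -
  let ?u = "\<nu> b"
  have D: "is_derivation (dB i)" using derB i .
  have "dB i (?u ^ N * y) = ?u^N * dB i y + y * dB i (?u^N)" using D unfolding is_derivation_def by blast
  then have 1: "?u * dB i (\<nu> a) = ?u^Suc N * dB i y + y * (dB i (?u^N) * ?u)" using e by (simp add: algebra_simps)
  have dp: "dB i (?u^N) * ?u = of_nat N * ?u ^ N * dB i ?u" by (rule deriv_pow[OF D])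
  have "y * (dB i (?u^N) * ?u) = y * (of_nat N * ?u ^ N * dB i ?u)" by (simp only: dp)
  also have "\<dots> = of_nat N * (?u^N * y) * dB i ?u" by (simp add: algebra_simps)
  also have "\<dots> = of_nat N * \<nu> a * dB i ?u" using e by simp
  finally have "?u * dB i (\<nu> a) = ?u^Suc N * dB i y + of_nat N * \<nu> a * dB i ?u" using 1 by simp
  then have 3: "?u^Suc N * dB i y = ?u * dB i (\<nu> a) - of_nat N * \<nu> a * dB i ?u" by (metis add_diff_cancel_right')
  have "\<nu> (b * dA i a - of_nat N * dA i b * a) = ?u * dB i (\<nu> a) - of_nat N * dB i ?u * \<nu> a"
    by (simp add: nu_d[OF i])
  then show ?thesis using 3 by (simp add: algebra_simps nu_d[OF i])
qed

end

locale dsetup2 = dsetup m dA dB \<nu>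
  for m :: nat and dA :: "nat \<Rightarrow> 'a::comm_ring_1 \<Rightarrow> 'a" and dB :: "nat \<Rightarrow> 'b::comm_ring_1 \<Rightarrow> 'b"
    and \<nu> :: "'a \<Rightarrow> 'b" +
  fixes \<eta> :: 'b and n :: nat and b :: "nat \<Rightarrow> 'a"
  assumes gen: "diff_generated m dB \<nu> \<eta>"
    and beta: "\<forall>k<n. \<nu> (b k) * \<eta> \<in> range \<nu>"
    and rad: "rad_diff_ideal_gen m dA (b ` {..<n}) = UNIV"
begin

lemma power_lemma:
  assumes k: "k < n" shows "\<exists>N a. \<nu> (b k) ^ N * y = \<nu> a"
proof -
  let ?S = "{y. \<exists>N a. \<nu> (b k) ^ N * y = \<nu> a}"
  let ?u = "\<nu> (b k)"
  have "diff_subring m dB ?S"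
    unfolding diff_subring_def
  proof (intro conjI ballI allI impI)
    show "1 \<in> ?S" by (rule CollectI, rule exI[of _ 0], rule exI[of _ 1]) simp
  next
    fix x y assume "x \<in> ?S" "y \<in> ?S"
    then obtain N a M c where x: "?u^N * x = \<nu> a" and y: "?u^M * y = \<nu> c" by blast
    have "?u^(N+M) * (x + y) = ?u^M * (?u^N * x) + ?u^N * (?u^M * y)" by (simp add: power_add algebra_simps)
    then have "?u^(N+M) * (x + y) = \<nu> (b k ^ M * a + b k ^ N * c)"
      using x y by simp
    then show "x + y \<in> ?S" by blast
    have "?u^(N+M) * (x * y) = (?u^N * x) * (?u^M * y)" by (simp add: power_add algebra_simps)
    then have "?u^(N+M) * (x * y) = \<nu> (a * c)" using x y by simp
    then show "x * y \<in> ?S" by blast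
  next
    fix x assume "x \<in> ?S"
    then obtain N a where x: "?u^N * x = \<nu> a" by blast
    then have "?u^N * (-x) = \<nu> (-a)" by simp
    then show "- x \<in> ?S" by blast
  next
    fix i x assume "i < m" "x \<in> ?S"
    then obtain N a where x: "?u^N * x = \<nu> a" by blast
    from key[OF \<open>i < m\<close> x] show "dB i x \<in> ?S" by blast
  qed
  moreover have "range \<nu> \<subseteq> ?S"
  proof
    fix y assume "y \<in> range \<nu>" then obtain a where "y = \<nu> a" by blast
    then have "?u^0 * y = \<nu> a" by simp
    then show "y \<in> ?S" by blast
  qed
  moreover have "\<eta> \<in> ?S"
  proof -
    obtain a where "?u * \<eta> = \<nu> a" using beta k by (metis rangeE)
    then have "?u^1 * \<eta> = \<nu> a" by simp
    then show ?thesis by blast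
  qed
  ultimately have "UNIV \<subseteq> ?S" using gen unfolding diff_generated_def by blast
  then show ?thesis by blast
qed

lemma some_b:
  assumes "P \<in> diff_spec m dA" shows "\<exists>k<n. b k \<notin> P"
proof (rule ccontr)
  assume "\<not> ?thesis"
  then have sub: "b ` {..<n} \<subseteq> P" by auto
  have pr: "is_prime_ideal P" and di: "diff_ideal m dA P" using assms by (auto simp: diff_spec_def)
  have "is_radical P" unfolding is_radical_def
  proof (intro allI impI)
    fix x :: 'a and N assume "x ^ N \<in> P"
    then have "x ^ N * 1 \<in> P" by simp
    moreover have "x \<notin> P \<Longrightarrow> 1 \<notin> P" using pr by (simp add: is_prime_ideal_def)
    ultimately show "x \<in> P" using prime_pow_cancel[OF pr, of x N 1] pr by (auto simp: is_prime_ideal_def)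
  qed
  then have "UNIV \<subseteq> P" using rad sub di unfolding rad_diff_ideal_gen_def by blast
  then show False using pr by (auto simp: is_prime_ideal_def)
qed

definition Q :: "'a set \<Rightarrow> nat \<Rightarrow> 'b set" where
  "Q P k = {y. \<exists>N a. a \<in> P \<and> \<nu> (b k) ^ N * y = \<nu> a}"

lemma Q_prop:
  assumes P: "P \<in> diff_V m dA (\<nu> -` {0})" and k: "k < n" and bk: "b k \<notin> P"
  shows "Q P k \<in> diff_spec m dB" "\<nu> -` Q P k = P"
proof -
  have pr: "is_prime_ideal P" and di: "diff_ideal m dA P" and ker: "\<nu> -` {0} \<subseteq> P"
    using P by (auto simp: diff_V_def diff_spec_def)
  have id: "is_ideal P" using pr by (simp add: is_prime_ideal_def)
  let ?u = "\<nu> (b k)"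
  have canc: "x \<in> P" if "\<nu> (b k ^ N * x) = \<nu> a" "a \<in> P" for N x a
  proof -
    have "b k ^ N * x - a \<in> P" using ker that by auto
    then have "b k ^ N * x - a + a \<in> P" using ideal_facts(2)[OF id] that(2) by blast
    then show ?thesis using prime_pow_cancel[OF pr bk] by simp
  qed
  have idQ: "is_ideal (Q P k)" unfolding is_ideal_def
  proof (intro conjI ballI allI)
    show "0 \<in> Q P k" unfolding Q_def using ideal_facts(1)[OF id] by force
  next
    fix x y assume "x \<in> Q P k" "y \<in> Q P k"
    then obtain N a M c where x: "?u^N * x = \<nu> a" "a \<in> P" and y: "?u^M * y = \<nu> c" "c \<in> P"
      unfolding Q_def by blast
    have "?u^(N+M) * (x + y) = ?u^M * (?u^N * x) + ?u^N * (?u^M * y)" by (simp add: power_add algebra_simps)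
    then have "?u^(N+M) * (x + y) = \<nu> (b k ^ M * a + b k ^ N * c)"
      using x y by simp
    moreover have "b k ^ M * a + b k ^ N * c \<in> P" using ideal_facts(2)[OF id ideal_facts(3)[OF id x(2)] ideal_facts(3)[OF id y(2)]] .
    ultimately show "x + y \<in> Q P k" unfolding Q_def by blast
  next
    fix x r assume "x \<in> Q P k"
    then obtain N a where x: "?u^N * x = \<nu> a" "a \<in> P" unfolding Q_def by blast
    obtain M c where r: "?u^M * r = \<nu> c" using power_lemma[OF k] by blast
    have "?u^(N+M) * (r * x) = (?u^M * r) * (?u^N * x)" by (simp add: power_add algebra_simps)
    then have "?u^(N+M) * (r * x) = \<nu> (c * a)" using x r by simp
    moreover have "c * a \<in> P" using ideal_facts(3)[OF id x(2)] .
    ultimately show "r * x \<in> Q P k" unfolding Q_def by blast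
  qed
  show contr: "\<nu> -` Q P k = P"
  proof
    show "\<nu> -` Q P k \<subseteq> P"
    proof
      fix x assume "x \<in> \<nu> -` Q P k"
      then obtain N a where "?u^N * \<nu> x = \<nu> a" "a \<in> P" unfolding Q_def by blast
      then show "x \<in> P" using canc[of N x a] by simp
    qed
    show "P \<subseteq> \<nu> -` Q P k"
    proof
      fix x assume "x \<in> P"
      then have "x \<in> P \<and> ?u^0 * \<nu> x = \<nu> x" by simp
      then show "x \<in> \<nu> -` Q P k" unfolding Q_def by blast
    qed
  qed
  have one: "1 \<notin> Q P k"
  proof
    assume "1 \<in> Q P k"
    then have "1 \<in> \<nu> -` Q P k" by simp
    then show False using contr pr by (simp add: is_prime_ideal_def)
  qed
  have prime: "x \<in> Q P k \<or> y \<in> Q P k" if xyQ: "x * y \<in> Q P k" for x y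
  proof -
    obtain N a where xy: "?u^N * (x*y) = \<nu> a" "a \<in> P" using xyQ unfolding Q_def by blast
    obtain K c where x: "?u^K * x = \<nu> c" using power_lemma[OF k] by blast
    obtain L e where y: "?u^L * y = \<nu> e" using power_lemma[OF k] by blast
    have "?u^(N+K+L) * (x * y) = ?u^N * ((?u^K * x) * (?u^L * y))" by (simp add: power_add algebra_simps)
    also have "\<dots> = \<nu> (b k ^ N * (c * e))" by (simp only: x y nu_mult nu_pow)
    finally have "\<nu> (b k ^ N * (c * e)) = ?u^(N+K+L) * (x * y)" by simp
    also have "\<dots> = ?u^(K+L) * (?u^N * (x * y))" by (simp add: power_add algebra_simps)
    also have "\<dots> = \<nu> (b k ^ (K+L) * a)" by (simp only: xy(1) nu_mult nu_pow)
    finally have "c * e \<in> P" using canc ideal_facts(3)[OF id xy(2)] by blast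
    then have "c \<in> P \<or> e \<in> P" using pr by (simp add: is_prime_ideal_def)
    then show ?thesis using x y unfolding Q_def by blast
  qed
  have dif: "dB i y \<in> Q P k" if im: "i < m" and yQ: "y \<in> Q P k" for i y
  proof -
    obtain N a where y: "?u^N * y = \<nu> a" "a \<in> P" using yQ unfolding Q_def by blast
    have "b k * dA i a - of_nat N * dA i (b k) * a \<in> P"
    proof -
      have "dA i a \<in> P" using y(2) di im unfolding diff_ideal_def by blast
      then have "b k * dA i a \<in> P" by (rule ideal_facts(3)[OF id])
      moreover have "of_nat N * dA i (b k) * a \<in> P" by (rule ideal_facts(3)[OF id y(2)])
      ultimately show ?thesis by (rule ideal_facts(6)[OF id])
    qed
    then show ?thesis using key[OF im y(1)] unfolding Q_def by blast
  qed
  show "Q P k \<in> diff_spec m dB"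
    unfolding diff_spec_def diff_ideal_def is_prime_ideal_def
    using idQ one prime dif by blast
qed

lemma Q_unique:
  assumes q: "q \<in> diff_spec m dB" and k: "k < n" and bk: "b k \<notin> \<nu> -` q"
  shows "q = Q (\<nu> -` q) k"
proof -
  have pr: "is_prime_ideal q" using q by (simp add: diff_spec_def)
  have id: "is_ideal q" using pr by (simp add: is_prime_ideal_def)
  show ?thesis
  proof
    show "q \<subseteq> Q (\<nu> -` q) k"
    proof
      fix y assume y: "y \<in> q"
      obtain N a where e: "\<nu> (b k) ^ N * y = \<nu> a" using power_lemma[OF k] by blast
      then have "\<nu> a \<in> q" using y ideal_facts(3)[OF id] by metis
      then show "y \<in> Q (\<nu> -` q) k" using e unfolding Q_def by blast
    qed
    show "Q (\<nu> -` q) k \<subseteq> q"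
    proof
      fix y assume "y \<in> Q (\<nu> -` q) k"
      then obtain N a where "\<nu> a \<in> q" "\<nu> (b k) ^ N * y = \<nu> a" unfolding Q_def by blast
      then show "y \<in> q" using prime_pow_cancel[OF pr, of "\<nu> (b k)" N y] bk by simp
    qed
  qed
qed

end


context dsetup2 begin

lemma preimage_spec:
  assumes q: "q \<in> diff_spec m dB" shows "\<nu> -` q \<in> diff_V m dA (\<nu> -` {0})"
proof -
  have pr: "is_prime_ideal q" and di: "diff_ideal m dB q" using q by (auto simp: diff_spec_def)
  have id: "is_ideal q" using pr by (simp add: is_prime_ideal_def)
  have "is_ideal (\<nu> -` q)" unfolding is_ideal_def
    using ideal_facts(1,2,3)[OF id] by auto
  moreover have "1 \<notin> \<nu> -` q" using pr by (simp add: is_prime_ideal_def)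
  moreover have "\<forall>x y. x * y \<in> \<nu> -` q \<longrightarrow> x \<in> \<nu> -` q \<or> y \<in> \<nu> -` q"
    using pr by (simp add: is_prime_ideal_def)
  moreover have "\<forall>i<m. \<forall>x\<in>\<nu> -` q. dA i x \<in> \<nu> -` q"
    using di by (simp add: diff_ideal_def nu_d)
  moreover have "\<nu> -` {0} \<subseteq> \<nu> -` q" using ideal_facts(1)[OF id] by auto
  ultimately show ?thesis by (simp add: diff_V_def diff_spec_def diff_ideal_def is_prime_ideal_def)
qed

lemma image_spec: "(\<lambda>q. \<nu> -` q) ` diff_spec m dB = diff_V m dA (\<nu> -` {0})"
proof
  show "(\<lambda>q. \<nu> -` q) ` diff_spec m dB \<subseteq> diff_V m dA (\<nu> -` {0})" using preimage_spec by blast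
  show "diff_V m dA (\<nu> -` {0}) \<subseteq> (\<lambda>q. \<nu> -` q) ` diff_spec m dB"
  proof
    fix P assume P: "P \<in> diff_V m dA (\<nu> -` {0})"
    then have "P \<in> diff_spec m dA" by (simp add: diff_V_def)
    then obtain k where k: "k < n" "b k \<notin> P" using some_b by blast
    show "P \<in> (\<lambda>q. \<nu> -` q) ` diff_spec m dB"
      using Q_prop[OF P k] by (metis image_eqI)
  qed
qed

lemma inj: "inj_on (\<lambda>q. \<nu> -` q) (diff_spec m dB)"
proof (rule inj_onI)
  fix q1 q2 assume q1: "q1 \<in> diff_spec m dB" and q2: "q2 \<in> diff_spec m dB" and e: "\<nu> -` q1 = \<nu> -` q2"
  have "\<nu> -` q1 \<in> diff_spec m dA" using preimage_spec[OF q1] by (simp add: diff_V_def)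
  then obtain k where k: "k < n" "b k \<notin> \<nu> -` q1" using some_b by blast
  have "q1 = Q (\<nu> -` q1) k" using Q_unique[OF q1 k] .
  moreover have "q2 = Q (\<nu> -` q2) k" using Q_unique[OF q2 k(1)] k(2) e by simp
  ultimately show "q1 = q2" using e by simp
qed

lemma closed_image:
  "(\<lambda>q. \<nu> -` q) ` diff_V m dB E =
     diff_V m dA {a. \<exists>k<n. \<exists>N. \<exists>y\<in>E. \<nu> (b k) ^ N * y = \<nu> a} \<inter> diff_V m dA (\<nu> -` {0})"
  (is "_ = diff_V m dA ?E' \<inter> _")
proof
  show "(\<lambda>q. \<nu> -` q) ` diff_V m dB E \<subseteq> diff_V m dA ?E' \<inter> diff_V m dA (\<nu> -` {0})"
  proof
    fix P assume "P \<in> (\<lambda>q. \<nu> -` q) ` diff_V m dB E"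
    then obtain q where q: "q \<in> diff_spec m dB" "E \<subseteq> q" and P: "P = \<nu> -` q" by (auto simp: diff_V_def)
    have id: "is_ideal q" using q by (simp add: diff_spec_def is_prime_ideal_def)
    have PV: "P \<in> diff_V m dA (\<nu> -` {0})" using preimage_spec[OF q(1)] P by simp
    have "?E' \<subseteq> P"
    proof
      fix a assume "a \<in> ?E'"
      then obtain k N y where "y \<in> E" "\<nu> (b k) ^ N * y = \<nu> a" by blast
      then show "a \<in> P" using P q(2) ideal_facts(3)[OF id] by (metis subsetD vimageI2)
    qed
    then show "P \<in> diff_V m dA ?E' \<inter> diff_V m dA (\<nu> -` {0})" using PV by (simp add: diff_V_def)
  qed
  show "diff_V m dA ?E' \<inter> diff_V m dA (\<nu> -` {0}) \<subseteq> (\<lambda>q. \<nu> -` q) ` diff_V m dB E"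
  proof
    fix P assume H: "P \<in> diff_V m dA ?E' \<inter> diff_V m dA (\<nu> -` {0})"
    then have P: "P \<in> diff_V m dA (\<nu> -` {0})" and E': "?E' \<subseteq> P" by (auto simp: diff_V_def)
    then have "P \<in> diff_spec m dA" by (simp add: diff_V_def)
    then obtain k where k: "k < n" "b k \<notin> P" using some_b by blast
    have "E \<subseteq> Q P k"
    proof
      fix y assume y: "y \<in> E"
      obtain N a where e: "\<nu> (b k) ^ N * y = \<nu> a" using power_lemma[OF k(1)] by blast
      then have "a \<in> P" using E' y k(1) by blast
      then show "y \<in> Q P k" using e unfolding Q_def by blast
    qed
    then have "Q P k \<in> diff_V m dB E" using Q_prop(1)[OF P k] by (simp add: diff_V_def)
    then show "P \<in> (\<lambda>q. \<nu> -` q) ` diff_V m dB E" using Q_prop(2)[OF P k] by (metis image_eqI)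
  qed
qed

lemma main: "homeomorphic_map (kolchin_topology m dB)
           (subtopology (kolchin_topology m dA) (diff_V m dA (\<nu> -` {0})))
           (\<lambda>q. \<nu> -` q)"
proof -
  have VK: "diff_V m dA (\<nu> -` {0}) \<subseteq> diff_spec m dA" by (auto simp: diff_V_def)
  have tY: "topspace (subtopology (kolchin_topology m dA) (diff_V m dA (\<nu> -` {0}))) = diff_V m dA (\<nu> -` {0})"
    using VK by (simp add: topspace_kol Int_absorb1)
  show ?thesis
  proof (rule bijective_closed_imp_homeomorphic_map)
    show "continuous_map (kolchin_topology m dB) (subtopology (kolchin_topology m dA) (diff_V m dA (\<nu> -` {0}))) (\<lambda>q. \<nu> -` q)"
      unfolding continuous_map_closedin
    proof (intro conjI allI impI)
      show "(\<lambda>q. \<nu> -` q) \<in> topspace (kolchin_topology m dB) \<rightarrow> topspace (subtopology (kolchin_topology m dA) (diff_V m dA (\<nu> -` {0})))"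
        unfolding tY topspace_kol[of m dB] using preimage_spec by blast
      fix C assume "closedin (subtopology (kolchin_topology m dA) (diff_V m dA (\<nu> -` {0}))) C"
      then obtain E where C: "C = diff_V m dA E \<inter> diff_V m dA (\<nu> -` {0})"
        unfolding closedin_subtopology closedin_kol by blast
      have "{x \<in> topspace (kolchin_topology m dB). \<nu> -` x \<in> C} = diff_V m dB (\<nu> ` E)"
        unfolding topspace_kol C using preimage_spec by (auto simp: diff_V_def)
      then show "closedin (kolchin_topology m dB) {x \<in> topspace (kolchin_topology m dB). \<nu> -` x \<in> C}"
        unfolding closedin_kol by blast
    qed
    show "closed_map (kolchin_topology m dB) (subtopology (kolchin_topology m dA) (diff_V m dA (\<nu> -` {0}))) (\<lambda>q. \<nu> -` q)"
      unfolding closed_map_def closedin_subtopology closedin_kol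
      using closed_image by blast
    show "(\<lambda>q. \<nu> -` q) ` topspace (kolchin_topology m dB) = topspace (subtopology (kolchin_topology m dA) (diff_V m dA (\<nu> -` {0})))"
      unfolding tY topspace_kol[of m dB] using image_spec .
    show "inj_on (\<lambda>q. \<nu> -` q) (topspace (kolchin_topology m dB))"
      unfolding topspace_kol[of m dB] using inj .
  qed
qed

end

theorem lemma2p2:
  fixes m :: nat
    and dA :: "nat \<Rightarrow> 'a::comm_ring_1 \<Rightarrow> 'a"
    and dB :: "nat \<Rightarrow> 'b::comm_ring_1 \<Rightarrow> 'b"
    and \<nu> :: "'a \<Rightarrow> 'b" and \<eta> :: 'b
    and n :: nat and b :: "nat \<Rightarrow> 'a"
  assumes "diff_ring m dA" and "diff_ring m dB"
    and "diff_hom m dA dB \<nu>"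
    and "diff_generated m dB \<nu> \<eta>"
    and "\<forall>k<n. \<nu> (b k) * \<eta> \<in> range \<nu>"
    and "rad_diff_ideal_gen m dA (b ` {..<n}) = UNIV"
  shows "homeomorphic_map (kolchin_topology m dB)
           (subtopology (kolchin_topology m dA) (diff_V m dA (\<nu> -` {0})))
           (\<lambda>q. \<nu> -` q)"
proof -
  interpret dsetup2 m dA dB \<nu> \<eta> n b
    using assms by (unfold_locales) auto
  show ?thesis by (rule main)
qed

end
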